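(* Let $R=\bigoplus_{s\in S}R_s$ be an $S$-graded ring inducing $S$ with $S$ cancellative. Then $R$ is graded von Neumann regular if and only if $R$ is nearly epsilon-strongly graded and $R_e$ is a von Neumann regular ring for every idempotent $e\in S$.
   Context: Rings are associative, not necessarily unital. $S$-graded ring inducing $S$: $S$ a partial groupoid, $R=\bigoplus_{s\in S}R_s$ with additive subgroups, $R_sR_t\subseteq R_{st}$ when $st$ defined, $R_sR_t\ne0$ implies $st$ defined. Convention: $0\in S$, $R_0=0$, $S\setminus\{0\}=\{s:R_s\ne0\}$, undefined products set to $0$, $0$ absorbing. $H_R=\bigcup_sR_s$. $S$ cancellative: $0\ne su=tu$ or $0\ne us=ut$ implies $s=t$. $I(S)$: idempotents. (LRI): for every $s\in S$ there exist $s^{-1}\in S$, $e,f\in I(S)$ with $es=sf=s$, $fs^{-1}=s^{-1}e=s^{-1}$, $ss^{-1}=e$, $s^{-1}s=f$. $R_sR_t$ denotes the additive subgroup generated by products. $R$ is nearly epsilon-strongly graded if $S$ satisfies (LRI) and for every $s$ and $x\in R_s$ there exist $\epsilon(x)\in R_sR_{s^{-1}}$, $\epsilon'(x)\in R_{s^{-1}}R_s$ with $\epsilon(x)x=x=x\epsilon'(x)$. $R$ is graded von Neumann regular if $x\in xRx$ for all $x\in H_R$. *)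

theory Defs
  imports Main
begin

text \<open>Rings are associative, not necessarily unital: type class ring.
  The partial groupoid S is the whole type 's together with a distinguished
  zero element z (standing for "undefined") and a total operation op
  in which undefined products are set to z; z is absorbing.\<close>

definition additive_subgroup :: "'a::ab_group_add set \<Rightarrow> bool" where
  "additive_subgroup A \<longleftrightarrow> 0 \<in> A \<and> (\<forall>x\<in>A. \<forall>y\<in>A. x + y \<in> A) \<and> (\<forall>x\<in>A. - x \<in> A)"

inductive_set prodset :: "'a::ring set \<Rightarrow> 'a set \<Rightarrow> 'a set" for A B where
  prod: "a \<in> A \<Longrightarrow> b \<in> B \<Longrightarrow> a * b \<in> prodset A B"
| zero: "0 \<in> prodset A B"
| add: "x \<in> prodset A B \<Longrightarrow> y \<in> prodset A B \<Longrightarrow> x + y \<in> prodset A B"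
| neg: "x \<in> prodset A B \<Longrightarrow> - x \<in> prodset A B"

definition graded_ring_inducing ::
  "'s \<Rightarrow> ('s \<Rightarrow> 's \<Rightarrow> 's) \<Rightarrow> ('s \<Rightarrow> 'a::ring set) \<Rightarrow> bool" where
  "graded_ring_inducing z op Rg \<longleftrightarrow>
     (\<forall>s. op z s = z \<and> op s z = z) \<and>
     (\<forall>s. additive_subgroup (Rg s)) \<and>
     Rg z = {0} \<and>
     (\<forall>s. s \<noteq> z \<longrightarrow> Rg s \<noteq> {0}) \<and>
     (\<forall>x::'a. \<exists>F c. finite F \<and> (\<forall>s\<in>F. c s \<in> Rg s) \<and> x = (\<Sum>s\<in>F. c s)) \<and>
     (\<forall>F c. finite F \<and> (\<forall>s\<in>F. c s \<in> Rg s) \<and> (\<Sum>s\<in>F. c s) = 0 \<longrightarrow> (\<forall>s\<in>F. c s = 0)) \<and>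
     (\<forall>s t x y. x \<in> Rg s \<longrightarrow> y \<in> Rg t \<longrightarrow> x * y \<in> Rg (op s t))"

definition cancellative :: "'s \<Rightarrow> ('s \<Rightarrow> 's \<Rightarrow> 's) \<Rightarrow> bool" where
  "cancellative z op \<longleftrightarrow>
     (\<forall>s t u. (op s u \<noteq> z \<and> op s u = op t u) \<longrightarrow> s = t) \<and>
     (\<forall>s t u. (op u s \<noteq> z \<and> op u s = op u t) \<longrightarrow> s = t)"

definition idem :: "('s \<Rightarrow> 's \<Rightarrow> 's) \<Rightarrow> 's \<Rightarrow> bool" where
  "idem op e \<longleftrightarrow> op e e = e"

definition lri_inv :: "('s \<Rightarrow> 's \<Rightarrow> 's) \<Rightarrow> 's \<Rightarrow> 's \<Rightarrow> bool" where
  "lri_inv op s s' \<longleftrightarrow> (\<exists>e f. idem op e \<and> idem op f \<and>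
      op e s = s \<and> op s f = s \<and> op f s' = s' \<and> op s' e = s' \<and>
      op s s' = e \<and> op s' s = f)"

definition LRI :: "('s \<Rightarrow> 's \<Rightarrow> 's) \<Rightarrow> bool" where
  "LRI op \<longleftrightarrow> (\<forall>s. \<exists>s'. lri_inv op s s')"

definition nearly_epsilon_strongly_graded ::
  "('s \<Rightarrow> 's \<Rightarrow> 's) \<Rightarrow> ('s \<Rightarrow> 'a::ring set) \<Rightarrow> bool" where
  "nearly_epsilon_strongly_graded op Rg \<longleftrightarrow> LRI op \<and>
     (\<forall>s. \<exists>s'. lri_inv op s s' \<and>
        (\<forall>x\<in>Rg s. \<exists>\<epsilon>\<in>prodset (Rg s) (Rg s'). \<exists>\<epsilon>'\<in>prodset (Rg s') (Rg s).
            \<epsilon> * x = x \<and> x * \<epsilon>' = x))"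

definition homogeneous :: "('s \<Rightarrow> 'a set) \<Rightarrow> 'a set" where
  "homogeneous Rg = (\<Union>s. Rg s)"

definition graded_vnr :: "('s \<Rightarrow> 'a::ring set) \<Rightarrow> bool" where
  "graded_vnr Rg \<longleftrightarrow> (\<forall>x\<in>homogeneous Rg. \<exists>y::'a. x = x * y * x)"

definition vnr_subring :: "'a::ring set \<Rightarrow> bool" where
  "vnr_subring A \<longleftrightarrow> (\<forall>x\<in>A. \<exists>y\<in>A. x = x * y * x)"

end

theory Submission
  imports Defs
begin

lemma asg_sum:
  assumes "additive_subgroup A" "finite F" "\<forall>t\<in>F. d t \<in> A"
  shows "(\<Sum>t\<in>F. d t) \<in> A"
  using assms(2,3)
proof (induction F rule: finite_induct)
  case empty then show ?case using assms(1) by (simp add: additive_subgroup_def)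
next
  case (insert x F) then show ?case using assms(1) by (simp add: additive_subgroup_def)
qed

context
  fixes z :: 's and op :: "'s \<Rightarrow> 's \<Rightarrow> 's" and Rg :: "'s \<Rightarrow> 'a::ring set"
  assumes G: "graded_ring_inducing z op Rg"
begin

lemmas G_u = G[unfolded graded_ring_inducing_def]
lemmas G_c1 = conjunct1[OF G_u]
lemmas G_c2 = conjunct1[OF conjunct2[OF G_u]]
lemmas G_c3 = conjunct1[OF conjunct2[OF conjunct2[OF G_u]]]
lemmas G_c4 = conjunct1[OF conjunct2[OF conjunct2[OF conjunct2[OF G_u]]]]
lemmas G_c5 = conjunct1[OF conjunct2[OF conjunct2[OF conjunct2[OF conjunct2[OF G_u]]]]]
lemmas G_c6 = conjunct1[OF conjunct2[OF conjunct2[OF conjunct2[OF conjunct2[OF conjunct2[OF G_u]]]]]]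
lemmas G_c7 = conjunct2[OF conjunct2[OF conjunct2[OF conjunct2[OF conjunct2[OF conjunct2[OF G_u]]]]]]

lemma G_asg: "additive_subgroup (Rg s)"
  using G_c2 by (rule spec)

lemma G_mult: "x \<in> Rg s \<Longrightarrow> y \<in> Rg t \<Longrightarrow> x * y \<in> Rg (op s t)"
  using G_c7 by blast

lemma G_indep:
  assumes "finite F" "\<forall>s\<in>F. c s \<in> Rg s" "(\<Sum>s\<in>F. c s) = 0" "s \<in> F" shows "c s = 0"
proof -
  show ?thesis by (rule G_c6[rule_format, OF conjI[OF assms(1) conjI[OF assms(2) assms(3)]] assms(4)])
qed

lemma G_z: "Rg z = {0}" by (rule G_c3)

lemma G_zop: "op z s = z" "op s z = z" using G_c1 by simp_all

lemma G_zero: "0 \<in> Rg s" using G_asg[of s] by (simp add: additive_subgroup_def)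

lemma G_nz: "s \<noteq> z \<Longrightarrow> \<exists>x\<in>Rg s. x \<noteq> 0"
proof -
  assume "s \<noteq> z"
  then have "Rg s \<noteq> {0}" using G_c4 by simp
  then show ?thesis using G_zero[of s] by blast
qed

lemma G_decomp: "\<exists>F c. finite F \<and> (\<forall>s\<in>F. c s \<in> Rg s) \<and> x = (\<Sum>s\<in>F. c s)"
  using G_c5 by (rule spec)

lemma deg_unique:
  assumes "a \<in> Rg u" "a \<in> Rg v" "a \<noteq> 0" shows "u = v"
proof (rule ccontr)
  assume uv: "u \<noteq> v"
  let ?c = "\<lambda>t. if t = u then a else - a"
  have "\<forall>t\<in>{u,v}. ?c t \<in> Rg t" using assms G_asg[of v] uv
    by (auto simp: additive_subgroup_def)
  moreover have "(\<Sum>t\<in>{u,v}. ?c t) = 0" using uv by simp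
  ultimately have "?c u = 0" using G_indep[of "{u,v}" ?c u] by simp
  then show False using assms by simp
qed

lemma component:
  assumes a: "a \<in> Rg s" and F: "finite F" and d: "\<forall>t\<in>F. d t \<in> Rg (g t)"
    and eq: "a = (\<Sum>t\<in>F. d t)"
  shows "a = (\<Sum>t\<in>{t\<in>F. g t = s}. d t)"
proof -
  define D where "D = insert s (g ` F)"
  define c where "c u = (\<Sum>t\<in>{t\<in>F. g t = u}. d t) - (if u = s then a else 0)" for u
  have fD: "finite D" using F by (simp add: D_def)
  have cin: "\<forall>u\<in>D. c u \<in> Rg u"
  proof
    fix u assume "u \<in> D"
    have dd: "\<forall>t\<in>{t\<in>F. g t = u}. d t \<in> Rg u" using d by auto
    have fF: "finite {t\<in>F. g t = u}" using F by simp
    have s1: "(\<Sum>t\<in>{t\<in>F. g t = u}. d t) \<in> Rg u"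
      by (rule asg_sum[OF G_asg fF dd])
    have s2: "(if u = s then a else 0) \<in> Rg u" using a G_zero[of u] by simp
    have asg: "\<forall>x\<in>Rg u. \<forall>y\<in>Rg u. x + y \<in> Rg u" "\<forall>x\<in>Rg u. - x \<in> Rg u"
      using G_asg[of u] unfolding additive_subgroup_def by blast+
    have "- (if u = s then a else 0) \<in> Rg u" using asg(2) s2 by blast
    then have "(\<Sum>t\<in>{t\<in>F. g t = u}. d t) + - (if u = s then a else 0) \<in> Rg u"
      using asg(1) s1 by blast
    then show "c u \<in> Rg u" unfolding c_def by (simp only: diff_conv_add_uminus)
  qed
  have "(\<Sum>u\<in>D. c u) = (\<Sum>u\<in>D. (\<Sum>t\<in>{t\<in>F. g t = u}. d t)) - (\<Sum>u\<in>D. (if u = s then a else 0))"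
    unfolding c_def by (simp add: sum_subtractf)
  also have "(\<Sum>u\<in>D. (\<Sum>t\<in>{t\<in>F. g t = u}. d t)) = (\<Sum>t\<in>F. d t)"
    using sum.group[OF F fD, of g d] by (auto simp: D_def)
  also have "(\<Sum>u\<in>D. (if u = s then a else 0)) = a" using fD by (simp add: D_def)
  finally have "(\<Sum>u\<in>D. c u) = 0" using eq by simp
  then have "c s = 0" using G_indep[OF fD cin] by (simp add: D_def)
  then show ?thesis by (simp add: c_def)
qed

lemma deg_cancel:
  assumes C: "cancellative z op" and s: "s \<noteq> z"
    and h1: "op (op s t) s = s" and h2: "op (op s t2) s = s"
  shows "t = t2"
proof -
  have c1: "\<forall>a b u. op a u \<noteq> z \<and> op a u = op b u \<longrightarrow> a = b"
    and c2: "\<forall>a b u. op u a \<noteq> z \<and> op u a = op u b \<longrightarrow> a = b"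
    using C unfolding cancellative_def by (rule conjunct1, rule conjunct2)
  have e1: "op s t = op s t2"
    by (rule c1[rule_format, where u=s]) (simp add: h1 h2 s)
  have nz: "op s t \<noteq> z"
  proof
    assume "op s t = z"
    then have "op (op s t) s = z" by (simp add: G_zop)
    then show False using h1 s by simp
  qed
  show ?thesis by (rule c2[rule_format, where u=s], rule conjI[OF nz e1])
qed

lemma find_w:
  assumes C: "cancellative z op" and V: "graded_vnr Rg"
    and x: "x \<in> Rg s" and x0: "x \<noteq> 0"
  shows "\<exists>t w. w \<in> Rg t \<and> x = x * w * x \<and> w = w * x * w"
proof -
  have sz: "s \<noteq> z" using x x0 G_z by auto
  obtain y where y: "x = x * y * x" using V x unfolding graded_vnr_def homogeneous_def by blast
  obtain F c where F: "finite F" and c: "\<forall>t\<in>F. c t \<in> Rg t" and yc: "y = (\<Sum>t\<in>F. c t)"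
    using G_decomp[of y] by blast
  define g where "g t = op (op s t) s" for t
  have "x = (\<Sum>t\<in>F. x * c t * x)" using y yc by (simp add: sum_distrib_left sum_distrib_right)
  moreover have "\<forall>t\<in>F. x * c t * x \<in> Rg (g t)" using c x G_mult unfolding g_def by blast
  ultimately have xs: "x = (\<Sum>t\<in>{t\<in>F. g t = s}. x * c t * x)"
    using component[OF x F, where d="\<lambda>t. x * c t * x" and g=g] by simp
  then obtain t0 where t0: "t0 \<in> F" "g t0 = s" using x0
    by (metis (mono_tags, lifting) empty_Collect_eq sum.empty)
  have "{t\<in>F. g t = s} = {t0}"
    using t0 deg_cancel[OF C sz] unfolding g_def by blast
  then have xe: "x = x * c t0 * x" using xs by simp
  define w where "w = c t0 * x * c t0"
  have "w \<in> Rg (op (op t0 s) t0)" unfolding w_def using c t0 x G_mult by blast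
  moreover have "x = x * w * x" unfolding w_def using xe by (metis mult.assoc)
  moreover have "w = w * x * w" unfolding w_def using xe by (metis mult.assoc)
  ultimately show ?thesis by blast
qed

lemma forward:
  assumes C: "cancellative z op" and V: "graded_vnr Rg"
  shows "nearly_epsilon_strongly_graded op Rg \<and> (\<forall>e. idem op e \<longrightarrow> vnr_subring (Rg e))"
proof -
  have main: "\<exists>s'. lri_inv op s s' \<and>
        (\<forall>x\<in>Rg s. \<exists>\<epsilon>\<in>prodset (Rg s) (Rg s'). \<exists>\<epsilon>'\<in>prodset (Rg s') (Rg s).
            \<epsilon> * x = x \<and> x * \<epsilon>' = x)" for s
  proof (cases "s = z")
    case True
    have "lri_inv op z z" unfolding lri_inv_def idem_def using G_zop by metis
    moreover have "\<forall>x\<in>Rg z. \<exists>\<epsilon>\<in>prodset (Rg z) (Rg z). \<exists>\<epsilon>'\<in>prodset (Rg z) (Rg z).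
            \<epsilon> * x = x \<and> x * \<epsilon>' = x" using G_z prodset.zero by fastforce
    ultimately show ?thesis using True by blast
  next
    case False
    then obtain x where x: "x \<in> Rg s" "x \<noteq> 0" using G_nz by blast
    then obtain t w where w: "w \<in> Rg t" "x = x * w * x" "w = w * x * w"
      using find_w[OF C V] by blast
    define e where "e = op s t"
    define f where "f = op t s"
    have xw: "x * w \<in> Rg e" unfolding e_def using x w G_mult by blast
    have wx: "w * x \<in> Rg f" unfolding f_def using x w G_mult by blast
    have xw0: "x * w \<noteq> 0" using w x by (metis mult_zero_left)
    have wx0: "w * x \<noteq> 0" using w x by (metis mult_zero_right mult.assoc)
    have w0: "w \<noteq> 0" using w x by (metis mult_zero_left mult_zero_right)
    have "(x*w)*(x*w) \<in> Rg (op e e)" using xw G_mult by blast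
    moreover have "(x*w)*(x*w) = x*w" using w by (metis mult.assoc)
    ultimately have ie: "idem op e" unfolding idem_def using deg_unique xw xw0 by metis
    have "(w*x)*(w*x) \<in> Rg (op f f)" using wx G_mult by blast
    moreover have "(w*x)*(w*x) = w*x" using w by (metis mult.assoc)
    ultimately have if': "idem op f" unfolding idem_def using deg_unique wx wx0 by metis
    have "(x*w)*x \<in> Rg (op e s)" using xw x G_mult by blast
    then have es: "op e s = s" using deg_unique x w by metis
    have "x*(w*x) \<in> Rg (op s f)" using wx x G_mult by blast
    then have sf: "op s f = s" using deg_unique x w by (metis mult.assoc)
    have "(w*x)*w \<in> Rg (op f t)" using wx w G_mult by blast
    then have ft: "op f t = t" using deg_unique w w0 by metis
    have "w*(x*w) \<in> Rg (op t e)" using xw w G_mult by blast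
    then have te: "op t e = t" using deg_unique w w0 by (metis mult.assoc)
    have lri: "lri_inv op s t" unfolding lri_inv_def
      using ie if' es sf ft te e_def f_def by blast
    have sts: "op (op s t) s = s" using es e_def by simp
    have "\<forall>x2\<in>Rg s. \<exists>\<epsilon>\<in>prodset (Rg s) (Rg t). \<exists>\<epsilon>'\<in>prodset (Rg t) (Rg s).
            \<epsilon> * x2 = x2 \<and> x2 * \<epsilon>' = x2"
    proof
      fix x2 assume x2: "x2 \<in> Rg s"
      show "\<exists>\<epsilon>\<in>prodset (Rg s) (Rg t). \<exists>\<epsilon>'\<in>prodset (Rg t) (Rg s).
            \<epsilon> * x2 = x2 \<and> x2 * \<epsilon>' = x2"
      proof (cases "x2 = 0")
        case True then show ?thesis using prodset.zero by fastforce
      next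
        case False
        then obtain t2 w2 where w2: "w2 \<in> Rg t2" "x2 = x2 * w2 * x2" "w2 = w2 * x2 * w2"
          using find_w[OF C V x2] by blast
        have "x2 * w2 * x2 \<in> Rg (op (op s t2) s)" using x2 w2 G_mult by blast
        then have "op (op s t2) s = s" using deg_unique x2 w2 False by metis
        then have "t2 = t" using deg_cancel[OF C \<open>s \<noteq> z\<close> _ sts] by simp
        then have "x2 * w2 \<in> prodset (Rg s) (Rg t)" "w2 * x2 \<in> prodset (Rg t) (Rg s)"
          using x2 w2 prodset.prod by blast+
        moreover have "(x2 * w2) * x2 = x2" "x2 * (w2 * x2) = x2" using w2 by (metis mult.assoc)+
        ultimately show ?thesis by blast
      qed
    qed
    then show ?thesis using lri by blast
  qed
  have "LRI op" unfolding LRI_def using main by blast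
  then have N: "nearly_epsilon_strongly_graded op Rg"
    unfolding nearly_epsilon_strongly_graded_def using main by blast
  have "vnr_subring (Rg e)" if ie: "idem op e" for e
    unfolding vnr_subring_def
  proof
    fix x assume x: "x \<in> Rg e"
    show "\<exists>y\<in>Rg e. x = x * y * x"
    proof (cases "x = 0")
      case True then show ?thesis using G_zero by auto
    next
      case False
      then obtain t w where w: "w \<in> Rg t" "x = x * w * x" "w = w * x * w"
        using find_w[OF C V x] by blast
      have ez: "e \<noteq> z" using x False G_z by auto
      have "x * w * x \<in> Rg (op (op e t) e)" using x w G_mult by blast
      then have "op (op e t) e = e" using deg_unique x w False by metis
      moreover have "op (op e e) e = e" using ie by (simp add: idem_def)
      ultimately have "t = e" using deg_cancel[OF C ez] by blast
      then show ?thesis using w by blast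
    qed
  qed
  then show ?thesis using N by blast
qed

end

lemma sum_list_neg: "sum_list (map (\<lambda>p. - (f p)) xs) = - sum_list (map f xs :: 'a::ab_group_add list)"
  by (induction xs) simp_all

lemma prodset_list:
  assumes B: "additive_subgroup B" and w: "w \<in> prodset B C"
  shows "\<exists>ps. set ps \<subseteq> B \<times> C \<and> w = sum_list (map (\<lambda>p. fst p * snd p) ps)"
  using w
proof (induction rule: prodset.induct)
  case (prod a b) then show ?case by (intro exI[of _ "[(a,b)]"]) simp
next
  case zero then show ?case by (intro exI[of _ "[]"]) simp
next
  case (add x y)
  then obtain p1 p2 where "set p1 \<subseteq> B \<times> C" "x = sum_list (map (\<lambda>p. fst p * snd p) p1)"
    "set p2 \<subseteq> B \<times> C" "y = sum_list (map (\<lambda>p. fst p * snd p) p2)" by blast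
  then show ?case by (intro exI[of _ "p1 @ p2"]) simp
next
  case (neg x)
  then obtain p1 where p1: "set p1 \<subseteq> B \<times> C" "x = sum_list (map (\<lambda>p. fst p * snd p) p1)" by blast
  let ?q = "map (\<lambda>p. (- fst p, snd p)) p1"
  have "set ?q \<subseteq> B \<times> C" using p1 B by (auto simp: additive_subgroup_def)
  moreover have "- x = sum_list (map (\<lambda>p. fst p * snd p) ?q)"
    using p1 sum_list_neg[of "\<lambda>p. fst p * snd p" p1] by (simp add: o_def)
  ultimately show ?case by blast
qed

lemma idem_gen:
  fixes x :: "'a::ring"
  assumes A0: "0 \<in> A" and Aadd: "\<forall>a\<in>A. \<forall>b\<in>A. a + b \<in> A" and Aneg: "\<forall>a\<in>A. - a \<in> A"
    and Amul: "\<forall>a\<in>A. \<forall>b\<in>A. a * b \<in> A" and V: "\<forall>a\<in>A. \<exists>v\<in>A. a = a * v * a"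
  shows "(\<forall>c\<in>set cs. x * c \<in> A) \<Longrightarrow> \<exists>g\<in>A. (\<exists>y. g = x * y) \<and> (\<forall>c\<in>set cs. g * (x * c) = x * c)"
proof (induction cs)
  case Nil then show ?case using A0 by (intro bexI[of _ 0]) (auto intro: exI[of _ 0])
next
  case (Cons c cs)
  then obtain g y where g: "g \<in> A" "g = x * y" "\<forall>c\<in>set cs. g * (x * c) = x * c" by auto
  define a where "a = x * c"
  have aA: "a \<in> A" using Cons.prems a_def by simp
  define b where "b = a - g * a"
  have gaA: "g * a \<in> A" using Amul g(1) aA by blast
  have bA: "b \<in> A" unfolding b_def diff_conv_add_uminus using aA gaA Aadd Aneg by blast
  then obtain v where v: "v \<in> A" "b = b * v * b" using V by blast
  define g' where "g' = g + b * v - b * v * g"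
  have bv: "b * v \<in> A" "b * v * g \<in> A" using bA v(1) g(1) Amul by blast+
  have g'A: "g' \<in> A" unfolding g'_def diff_conv_add_uminus using g(1) bv Aadd Aneg by blast
  define q where "q = c - y * x * c"
  have bq: "b = x * q" unfolding b_def a_def q_def g(2) by (simp add: right_diff_distrib mult.assoc)
  have "g' = x * (y + q * v - q * v * x * y)"
    unfolding g'_def bq g(2) by (simp add: distrib_left right_diff_distrib mult.assoc)
  moreover have "g' * a = a"
  proof -
    have "g' * a = g * a + b * v * (a - g * a)" unfolding g'_def by (simp add: algebra_simps)
    also have "a - g * a = b" by (simp add: b_def)
    also have "b * v * b = b" by (rule v(2)[symmetric])
    finally show ?thesis by (simp add: b_def)
  qed
  moreover have "\<forall>c'\<in>set cs. g' * (x * c') = x * c'"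
  proof
    fix c' assume "c' \<in> set cs"
    then have e: "g * (x * c') = x * c'" using g by blast
    have "g' * (x * c') = g * (x * c') + b * v * (x * c') - b * v * (g * (x * c'))"
      unfolding g'_def by (simp add: algebra_simps)
    then show "g' * (x * c') = x * c'" using e by simp
  qed
  ultimately show ?case using g'A a_def by auto
qed

lemma mult_sum_list_pairs:
  fixes g x :: "'a::ring"
  shows "(\<forall>p\<in>set ps. g * (x * fst p) = x * fst p) \<Longrightarrow>
    g * (x * sum_list (map (\<lambda>p. fst p * snd p) ps)) = x * sum_list (map (\<lambda>p. fst p * snd p) ps)"
proof (induction ps)
  case Nil then show ?case by simp
next
  case (Cons p ps)
  have "g * (x * (fst p * snd p)) = x * (fst p * snd p)"
    using Cons.prems by (metis list.set_intros(1) mult.assoc)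
  then show ?case using Cons by (simp add: distrib_left)
qed

lemma backward:
  fixes z :: 's and op :: "'s \<Rightarrow> 's \<Rightarrow> 's" and Rg :: "'s \<Rightarrow> 'a::ring set"
  assumes G: "graded_ring_inducing z op Rg"
    and N: "nearly_epsilon_strongly_graded op Rg" and V: "\<forall>e. idem op e \<longrightarrow> vnr_subring (Rg e)"
  shows "graded_vnr Rg"
  unfolding graded_vnr_def
proof
  fix x assume "x \<in> homogeneous Rg"
  then obtain s where x: "x \<in> Rg s" unfolding homogeneous_def by blast
  obtain s' where s': "lri_inv op s s'" and eps: "\<forall>x\<in>Rg s. \<exists>\<epsilon>\<in>prodset (Rg s) (Rg s'). \<exists>\<epsilon>'\<in>prodset (Rg s') (Rg s).
            \<epsilon> * x = x \<and> x * \<epsilon>' = x"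
    using spec[OF conjunct2[OF N[unfolded nearly_epsilon_strongly_graded_def]], of s] by blast
  have "\<exists>e. idem op e \<and> op s s' = e" using s' unfolding lri_inv_def by (elim exE conjE) (intro exI conjI)
  then obtain e where e: "idem op e" "op s s' = e" by (elim exE conjE)
  obtain ep where ep: "ep \<in> prodset (Rg s') (Rg s)" "x * ep = x" using eps x by blast
  obtain ps where ps: "set ps \<subseteq> Rg s' \<times> Rg s" "ep = sum_list (map (\<lambda>p. fst p * snd p) ps)"
    using prodset_list[OF G_asg[OF G] ep(1)] by blast
  let ?A = "Rg e"
  have A: "0 \<in> ?A" "\<forall>a\<in>?A. \<forall>b\<in>?A. a + b \<in> ?A" "\<forall>a\<in>?A. - a \<in> ?A"
    using G_asg[OF G, of e] by (auto simp: additive_subgroup_def)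
  have Am: "\<forall>a\<in>?A. \<forall>b\<in>?A. a * b \<in> ?A" using G_mult[OF G, of _ e _ e] e(1) by (simp add: idem_def)
  have AV: "\<forall>a\<in>?A. \<exists>v\<in>?A. a = a * v * a" using V e(1) unfolding vnr_subring_def by blast
  have xcA: "\<forall>c\<in>set (map fst ps). x * c \<in> ?A"
  proof
    fix c assume "c \<in> set (map fst ps)"
    then have "c \<in> Rg s'" using ps(1) by auto
    then have "x * c \<in> Rg (op s s')" by (rule G_mult[OF G x])
    then show "x * c \<in> ?A" by (simp add: e(2))
  qed
  obtain g y where g: "g = x * y" "\<forall>c\<in>set (map fst ps). g * (x * c) = x * c"
    using idem_gen[OF A Am AV xcA] by blast
  have "\<forall>p\<in>set ps. g * (x * fst p) = x * fst p" using g(2) by simp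
  then have "g * (x * ep) = x * ep" unfolding ps(2) by (rule mult_sum_list_pairs)
  then have "g * x = x" using ep(2) by simp
  then have "x * y * x = x" using g(1) by simp
  then show "\<exists>y. x = x * y * x" by (intro exI[of _ y]) (rule sym)
qed

theorem theorem4p10:
  fixes z :: 's and op :: "'s \<Rightarrow> 's \<Rightarrow> 's" and Rg :: "'s \<Rightarrow> 'a::ring set"
  assumes "graded_ring_inducing z op Rg"
    and "cancellative z op"
  shows "graded_vnr Rg \<longleftrightarrow>
           (nearly_epsilon_strongly_graded op Rg \<and> (\<forall>e. idem op e \<longrightarrow> vnr_subring (Rg e)))"
  using forward[OF assms] backward[OF assms(1)] by blast

end
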